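(* Let $X$ be a real Banach space and let $x, y \in X$ be non-zero. Then the following are equivalent: (i) there exist $\lambda > 0$ and $r > 0$ such that the open ball $B(\lambda x, r) = \{ z \in X : \|\lambda x - z\| < r\}$ contains $y$ but does not contain the zero vector; (ii) $\rho'_{-}(x, y) > 0$.
   Context: For $x, y$ in a real normed space $X$, the norm derivatives are $\rho'_{+}(x,y) = \lim_{t \to 0^+} \|x\| \frac{\|x+ty\| - \|x\|}{t}$ and $\rho'_{-}(x,y) = \lim_{t \to 0^-} \|x\| \frac{\|x+ty\| - \|x\|}{t}$. Balls are open balls. *)

theory Defs
  imports "HOL-Analysis.Analysis"
begin

text \<open>Left norm derivative: rho'_-(x,y) = lim_{t -> 0^-} ||x|| (||x+ty|| - ||x||)/t.
  (The limit always exists by convexity of t |-> ||x+ty||.)\<close>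
definition rho_minus :: "'a::real_normed_vector \<Rightarrow> 'a \<Rightarrow> real" where
  "rho_minus x y = Lim (at_left 0) (\<lambda>t::real. norm x * ((norm (x + t *\<^sub>R y) - norm x) / t))"

definition rho_plus :: "'a::real_normed_vector \<Rightarrow> 'a \<Rightarrow> real" where
  "rho_plus x y = Lim (at_right 0) (\<lambda>t::real. norm x * ((norm (x + t *\<^sub>R y) - norm x) / t))"

end

theory Submission
  imports Defs
begin

lemma slope_mono:
  fixes x y :: "'a::real_normed_vector"
  assumes "a \<le> b" "b < (0::real)"
  shows "(norm (x + a *\<^sub>R y) - norm x) / a \<le> (norm (x + b *\<^sub>R y) - norm x) / b"
proof -
  define l where "l = b / a"
  have a0: "a < 0" using assms by simp
  have l0: "0 < l" "l \<le> 1" using assms a0 by (auto simp: l_def field_simps)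
  have bl: "b = l * a" using a0 by (simp add: l_def)
  have "x + b *\<^sub>R y = l *\<^sub>R (x + a *\<^sub>R y) + (1 - l) *\<^sub>R x"
    by (simp add: bl algebra_simps)
  hence "norm (x + b *\<^sub>R y) \<le> l * norm (x + a *\<^sub>R y) + (1 - l) * norm x"
    using l0 norm_triangle_ineq[of "l *\<^sub>R (x + a *\<^sub>R y)" "(1 - l) *\<^sub>R x"] by simp
  hence "norm (x + b *\<^sub>R y) - norm x \<le> l * (norm (x + a *\<^sub>R y) - norm x)"
    by (simp add: algebra_simps)
  hence "(norm (x + b *\<^sub>R y) - norm x) / b \<ge> l * (norm (x + a *\<^sub>R y) - norm x) / b"
    using assms by (simp add: divide_right_mono_neg)
  also have "l * (norm (x + a *\<^sub>R y) - norm x) / b = (norm (x + a *\<^sub>R y) - norm x) / a"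
    using l0 a0 bl by simp
  finally show ?thesis .
qed

lemma slope_bound:
  fixes x y :: "'a::real_normed_vector"
  assumes "b < (0::real)"
  shows "(norm (x + b *\<^sub>R y) - norm x) / b \<le> norm y"
proof -
  have "norm x - norm (x + b *\<^sub>R y) \<le> norm (b *\<^sub>R y)"
    by (metis add_diff_cancel_left' norm_triangle_ineq2 norm_minus_commute)
  hence "norm x - norm (x + b *\<^sub>R y) \<le> - b * norm y" using assms by simp
  thus ?thesis using assms by (simp add: divide_simps algebra_simps)
qed

lemma slope_lim:
  fixes x y :: "'a::real_normed_vector"
  shows "\<exists>L. ((\<lambda>t::real. (norm (x + t *\<^sub>R y) - norm x) / t) \<longlongrightarrow> L) (at_left 0)"
proof -
  have "((\<lambda>t::real. (norm (x + t *\<^sub>R y) - norm x) / t) \<longlongrightarrow>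
     Sup ((\<lambda>t::real. (norm (x + t *\<^sub>R y) - norm x) / t) ` ({..<0} \<inter> UNIV)))
     (at 0 within ({..<0} \<inter> UNIV))"
    by (rule Lim_left_bound[where K="norm y"]) (auto intro: slope_mono slope_bound)
  thus ?thesis by auto
qed

theorem mainTheorem1:
  fixes x y :: "'a::banach"
  assumes "x \<noteq> 0" and "y \<noteq> 0"
  shows "(\<exists>c::real. \<exists>r::real. c > 0 \<and> r > 0 \<and>
            y \<in> ball (c *\<^sub>R x) r \<and> 0 \<notin> ball (c *\<^sub>R x) r)
         \<longleftrightarrow> rho_minus x y > 0"
proof -
  define g where "g = (\<lambda>t::real. (norm (x + t *\<^sub>R y) - norm x) / t)"
  obtain L where L: "(g \<longlongrightarrow> L) (at_left 0)" using slope_lim[of x y] unfolding g_def by blast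
  have nx: "norm x > 0" using assms by simp
  have "((\<lambda>t. norm x * g t) \<longlongrightarrow> norm x * L) (at_left 0)"
    by (intro tendsto_intros L)
  moreover have "rho_minus x y = Lim (at_left 0) (\<lambda>t. norm x * g t)"
    unfolding rho_minus_def g_def by (rule refl)
  ultimately have rho: "rho_minus x y = norm x * L"
    by (simp add: tendsto_Lim)
  have iff1: "(\<exists>c::real. \<exists>r::real. c > 0 \<and> r > 0 \<and>
            y \<in> ball (c *\<^sub>R x) r \<and> 0 \<notin> ball (c *\<^sub>R x) r)
        \<longleftrightarrow> (\<exists>s>0. norm (x + (-s) *\<^sub>R y) < norm x)"
  proof
    assume "\<exists>c::real. \<exists>r::real. c > 0 \<and> r > 0 \<and>
            y \<in> ball (c *\<^sub>R x) r \<and> 0 \<notin> ball (c *\<^sub>R x) r"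
    then obtain c r where cr: "c > 0" "r > 0" "norm (c *\<^sub>R x - y) < r" "norm (c *\<^sub>R x) \<ge> r"
      by (auto simp: dist_norm)
    hence "norm (c *\<^sub>R x - y) < norm (c *\<^sub>R x)" by simp
    hence "norm (c *\<^sub>R (x + (- (1/c)) *\<^sub>R y)) < norm (c *\<^sub>R x)"
      using cr(1) by (simp add: algebra_simps)
    hence "c * norm (x + (- (1/c)) *\<^sub>R y) < c * norm x" using cr(1) by simp
    hence "norm (x + (- (1/c)) *\<^sub>R y) < norm x" using cr(1) by simp
    thus "\<exists>s>0. norm (x + (-s) *\<^sub>R y) < norm x" using cr(1) by (intro exI[of _ "1/c"]) simp
  next
    assume "\<exists>s>0. norm (x + (-s) *\<^sub>R y) < norm x"
    then obtain s where s: "s > 0" "norm (x + (-s) *\<^sub>R y) < norm x" by blast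
    have "norm ((1/s) *\<^sub>R x - y) = norm ((1/s) *\<^sub>R (x + (-s) *\<^sub>R y))"
      using s(1) by (simp add: algebra_simps)
    also have "\<dots> = (1/s) * norm (x + (-s) *\<^sub>R y)" using s(1) by simp
    also have "\<dots> < (1/s) * norm x" using s by (simp add: divide_strict_right_mono)
    finally have "norm ((1/s) *\<^sub>R x - y) < norm ((1/s) *\<^sub>R x)" using s(1) by simp
    thus "\<exists>c::real. \<exists>r::real. c > 0 \<and> r > 0 \<and>
            y \<in> ball (c *\<^sub>R x) r \<and> 0 \<notin> ball (c *\<^sub>R x) r"
      using s(1) nx by (intro exI[of _ "1/s"] exI[of _ "norm ((1/s) *\<^sub>R x)"]) (auto simp: dist_norm)
  qed
  have iff2: "(\<exists>s>0. norm (x + (-s) *\<^sub>R y) < norm x) \<longleftrightarrow> L > 0"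
  proof
    assume "\<exists>s>0. norm (x + (-s) *\<^sub>R y) < norm x"
    then obtain s where s: "s > 0" "norm (x + (-s) *\<^sub>R y) < norm x" by blast
    have gs: "g (-s) > 0" using s by (simp add: g_def divide_simps)
    have "eventually (\<lambda>t. g (-s) \<le> g t) (at_left 0)"
    proof (rule eventually_at_leftI[of "-s"])
      fix t assume "t \<in> {-s<..<0}"
      thus "g (-s) \<le> g t" unfolding g_def by (intro slope_mono) auto
    qed (use s(1) in simp)
    hence "g (-s) \<le> L" by (intro tendsto_lowerbound[OF L]) (simp_all add: trivial_limit_at_left_real)
    thus "L > 0" using gs by simp
  next
    assume "L > 0"
    hence "eventually (\<lambda>t. g t > 0) (at_left 0)" using L order_tendstoD(1) by blast
    moreover have "eventually (\<lambda>t::real. t < 0) (at_left 0)" by (simp add: eventually_at_filter)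
    ultimately have "eventually (\<lambda>t. g t > 0 \<and> t < 0) (at_left 0)" by (rule eventually_conj)
    then obtain t where t: "g t > 0" "t < 0"
      using eventually_happens'[OF trivial_limit_at_left_real] by blast
    hence "norm (x + t *\<^sub>R y) < norm x" by (simp add: g_def divide_simps split: if_splits)
    thus "\<exists>s>0. norm (x + (-s) *\<^sub>R y) < norm x" using t by (intro exI[of _ "-t"]) simp
  qed
  show ?thesis using iff1 iff2 rho nx by (simp add: zero_less_mult_iff)
qed

end
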